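(* Let $n\geq 2$ and let $K\subset\mathbb{R}^n$ be a convex body with $\mathrm{r}_{n-1}(K)>0$. Then \[ \frac{\mathrm{R}_2(K)}{\mathrm{r}_{n-1}(K)}\leq 2\sqrt{2}\sqrt{n}. \]
   Context: A convex body is a compact convex subset of $\mathbb{R}^n$. For $1\le i\le n$, let $\mathcal{L}^n_i$ be the set of $i$-dimensional linear subspaces of $\mathbb{R}^n$, $K|L$ the orthogonal projection of $K$ onto $L$, $L^\perp$ the orthogonal complement. For a set $C$ contained in an affine subspace $A$, $\mathrm{R}(C;A)$ and $\mathrm{r}(C;A)$ denote the Euclidean circumradius and inradius of $C$ measured within $A$. Define $\mathrm{R}_i(K)=\min_{L\in\mathcal{L}^n_i}\mathrm{R}(K|L;L)$ and $\mathrm{r}_i(K)=\max_{L\in\mathcal{L}^n_i}\max_{x\in L^\perp}\mathrm{r}(K\cap(x+L);x+L)$. *)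

theory Defs
  imports "HOL-Analysis.Analysis"
begin

definition convex_body :: "'a::euclidean_space set \<Rightarrow> bool" where
  "convex_body K \<longleftrightarrow> compact K \<and> convex K \<and> K \<noteq> {}"

definition orth_proj :: "'a::euclidean_space set \<Rightarrow> 'a \<Rightarrow> 'a" where
  "orth_proj L x = (THE p. p \<in> L \<and> x - p \<in> orthogonal_comp L)"

definition circumradius_in :: "'a::euclidean_space set \<Rightarrow> 'a set \<Rightarrow> real" where
  "circumradius_in C A = Inf {r. \<exists>c\<in>A. C \<subseteq> cball c r}"

definition inradius_in :: "'a::euclidean_space set \<Rightarrow> 'a set \<Rightarrow> real" where
  "inradius_in C A = (if C = {} then 0 else Sup {r. r \<ge> 0 \<and> (\<exists>c\<in>A. cball c r \<inter> A \<subseteq> C)})"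

definition lin_subspaces :: "nat \<Rightarrow> 'a::euclidean_space set set" where
  "lin_subspaces i = {L. subspace L \<and> dim L = i}"

definition R_i :: "nat \<Rightarrow> 'a::euclidean_space set \<Rightarrow> real" where
  "R_i i K = Inf {circumradius_in (orth_proj L ` K) L | L. L \<in> lin_subspaces i}"

definition r_i :: "nat \<Rightarrow> 'a::euclidean_space set \<Rightarrow> real" where
  "r_i i K = Sup {inradius_in (K \<inter> ((+) x ` L)) ((+) x ` L) | L x.
                  L \<in> lin_subspaces i \<and> x \<in> orthogonal_comp L}"

end

theory Submission
  imports Defs
begin


definition hsupp :: "'a::euclidean_space set \<Rightarrow> 'a \<Rightarrow> real" where
  "hsupp K w = Sup ((\<lambda>x. inner w x) ` K)"

lemma hsupp_ge:
  assumes "compact K" "x \<in> K"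
  shows "inner w x \<le> hsupp K w"
proof -
  have "compact ((\<lambda>x. inner w x) ` K)"
    by (rule compact_continuous_image[OF _ assms(1)]) (intro continuous_intros)
  hence "bdd_above ((\<lambda>x. inner w x) ` K)"
    by (simp add: bounded_imp_bdd_above compact_imp_bounded)
  thus ?thesis unfolding hsupp_def using assms(2) by (auto intro: cSup_upper)
qed

lemma hsupp_attain:
  assumes "compact K" "K \<noteq> {}"
  shows "\<exists>x\<in>K. inner w x = hsupp K w"
proof -
  have c: "compact ((\<lambda>x. inner w x) ` K)"
    by (rule compact_continuous_image[OF _ assms(1)]) (intro continuous_intros)
  obtain s where s: "s \<in> (\<lambda>x. inner w x) ` K" "\<forall>t\<in>(\<lambda>x. inner w x) ` K. t \<le> s"
    using compact_attains_sup[OF c] assms(2) by blast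
  hence "hsupp K w = s" unfolding hsupp_def by (intro cSup_eq_maximum) auto
  thus ?thesis using s(1) by auto
qed

lemma hsupp_le:
  assumes "compact K" "K \<noteq> {}" "\<And>x. x \<in> K \<Longrightarrow> inner w x \<le> b"
  shows "hsupp K w \<le> b"
proof -
  obtain x where "x \<in> K" "inner w x = hsupp K w" using hsupp_attain[OF assms(1,2)] by blast
  thus ?thesis using assms(3)[of x] by simp
qed

lemma hsupp_lip:
  assumes "compact K" "K \<noteq> {}"
  obtains M where "M-lipschitz_on UNIV (hsupp K)"
proof -
  obtain M where M: "M > 0" "\<And>x. x \<in> K \<Longrightarrow> norm x \<le> M"
    using compact_imp_bounded[OF assms(1)] unfolding bounded_pos by auto
  have "hsupp K w1 \<le> hsupp K w2 + M * dist w1 w2" for w1 w2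
  proof (rule hsupp_le[OF assms])
    fix x assume x: "x \<in> K"
    have "inner w1 x = inner w2 x + inner (w1 - w2) x" by (simp add: inner_diff_left)
    also have "inner (w1 - w2) x \<le> norm (w1 - w2) * norm x" using norm_cauchy_schwarz by blast
    also have "\<dots> \<le> dist w1 w2 * M" using M(2)[OF x] by (simp add: dist_norm mult_left_mono)
    finally show "inner w1 x \<le> hsupp K w2 + M * dist w1 w2"
      using hsupp_ge[OF assms(1) x, of w2] by (simp add: mult.commute)
  qed
  note hw = this
  have "M-lipschitz_on UNIV (hsupp K)"
    unfolding lipschitz_on_def
  proof (intro conjI ballI)
    show "0 \<le> M" using M(1) by simp
    fix w1 w2 :: 'a
    have "hsupp K w1 \<le> hsupp K w2 + M * dist w1 w2" "hsupp K w2 \<le> hsupp K w1 + M * dist w1 w2"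
      using hw[of w1 w2] hw[of w2 w1] by (simp_all add: dist_commute)
    thus "dist (hsupp K w1) (hsupp K w2) \<le> M * dist w1 w2"
      by (simp add: dist_real_def abs_le_iff)
  qed
  thus ?thesis using that by blast
qed

lemma hsupp_cont:
  assumes "compact K" "K \<noteq> {}"
  shows "continuous_on S (hsupp K)"
proof -
  obtain M where "M-lipschitz_on UNIV (hsupp K)" using hsupp_lip[OF assms] by blast
  hence "continuous_on UNIV (hsupp K)" by (rule lipschitz_on_continuous_on)
  thus ?thesis by (rule continuous_on_subset) simp
qed



lemma span2: "y \<in> span {a, b::'a::real_vector} \<longleftrightarrow> (\<exists>s t. y = s *\<^sub>R a + t *\<^sub>R b)"
  unfolding span_insert span_singleton
  by (auto simp: algebra_simps)

lemma orth_proj_plane: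
  fixes \<nu> e :: "'a::euclidean_space"
  assumes "norm \<nu> = 1" "norm e = 1" "inner \<nu> e = 0"
  shows "orth_proj (span {\<nu>, e}) x = (inner x \<nu>) *\<^sub>R \<nu> + (inner x e) *\<^sub>R e"
proof -
  have nn: "inner \<nu> \<nu> = 1" "inner e e = 1" using assms by (simp_all add: dot_square_norm)
  have ev: "inner e \<nu> = 0" using assms(3) by (simp add: inner_commute)
  let ?p = "(inner x \<nu>) *\<^sub>R \<nu> + (inner x e) *\<^sub>R e"
  show ?thesis unfolding orth_proj_def
  proof (rule the_equality)
    have "x - ?p \<in> orthogonal_comp (span {\<nu>, e})"
      unfolding orthogonal_comp_def orthogonal_def
    proof (intro CollectI ballI)
      fix y assume "y \<in> span {\<nu>, e}"
      then obtain s t where "y = s *\<^sub>R \<nu> + t *\<^sub>R e" using span2 by blast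
      thus "inner y (x - ?p) = 0"
        by (simp add: inner_add_left inner_add_right inner_diff_left inner_diff_right nn ev assms(3)
           inner_commute[of x])
    qed
    moreover have "?p \<in> span {\<nu>, e}" unfolding span2 by blast
    ultimately show "?p \<in> span {\<nu>, e} \<and> x - ?p \<in> orthogonal_comp (span {\<nu>, e})" by blast
  next
    fix p assume p: "p \<in> span {\<nu>, e} \<and> x - p \<in> orthogonal_comp (span {\<nu>, e})"
    then obtain s t where st: "p = s *\<^sub>R \<nu> + t *\<^sub>R e" using span2 by blast
    have "\<nu> \<in> span {\<nu>, e}" "e \<in> span {\<nu>, e}" by (auto intro: span_base)
    hence "inner \<nu> (x - p) = 0" "inner e (x - p) = 0" using p unfolding orthogonal_comp_def orthogonal_def
      by auto
    hence "s = inner x \<nu>" "t = inner x e" unfolding st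
      by (auto simp: inner_add_right inner_diff_right nn ev assms(3) inner_commute[of x])
    thus "p = ?p" using st by simp
  qed
qed

lemma plane_in_subspaces:
  fixes \<nu> e :: "'a::euclidean_space"
  assumes "norm \<nu> = 1" "norm e = 1" "inner \<nu> e = 0"
  shows "span {\<nu>, e} \<in> lin_subspaces 2"
proof -
  have ne: "\<nu> \<noteq> e" using assms by auto
  have "independent {\<nu>, e}"
    by (rule pairwise_orthogonal_independent)
       (use assms ne in \<open>auto simp: pairwise_def orthogonal_def inner_commute\<close>)
  hence "dim (span {\<nu>, e}) = 2" using ne by (simp add: dim_eq_card_independent)
  thus ?thesis unfolding lin_subspaces_def by auto
qed



lemma R_i_le:
  fixes K :: "'a::euclidean_space set"
  assumes "K \<noteq> {}" "E \<in> lin_subspaces 2" "z0 \<in> E" "orth_proj E ` K \<subseteq> cball z0 R"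
  shows "R_i 2 K \<le> R"
proof -
  define Ob where "Ob = {circumradius_in (orth_proj L ` K) L | L. L \<in> lin_subspaces 2}"
  have pos: "0 \<le> r" if "c \<in> L" "orth_proj L ` K \<subseteq> cball c r" for L c r
  proof -
    obtain x where "x \<in> K" using assms(1) by blast
    hence "orth_proj L x \<in> cball c r" using that by blast
    thus ?thesis by (metis dist_not_less_zero mem_cball order.trans not_le)
  qed
  have "bdd_below Ob" unfolding bdd_below_def
  proof (intro exI ballI)
    fix y assume "y \<in> Ob"
    then obtain L where yL: "y = circumradius_in (orth_proj L ` K) L" unfolding Ob_def by blast
    define S where "S = {r. \<exists>c\<in>L. orth_proj L ` K \<subseteq> cball c r}"
    have yS: "y = Inf S" unfolding yL S_def circumradius_in_def by simp
    show "min 0 (Inf ({}::real set)) \<le> y"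
    proof (cases "S = {}")
      case True thus ?thesis using yS by simp
    next
      case False
      have "0 \<le> Inf S" by (rule cInf_greatest[OF False]) (use pos in \<open>auto simp: S_def\<close>)
      thus ?thesis using yS by simp
    qed
  qed
  moreover have "circumradius_in (orth_proj E ` K) E \<le> R"
    unfolding circumradius_in_def
  proof (rule cInf_lower)
    show "R \<in> {r. \<exists>c\<in>E. orth_proj E ` K \<subseteq> cball c r}" using assms(3,4) by blast
    show "bdd_below {r. \<exists>c\<in>E. orth_proj E ` K \<subseteq> cball c r}"
      by (rule bdd_belowI[where m=0]) (use pos in blast)
  qed
  moreover have "circumradius_in (orth_proj E ` K) E \<in> Ob" unfolding Ob_def using assms(2) by blast
  ultimately have "Inf Ob \<le> R" by (meson cInf_lower2)
  thus ?thesis unfolding R_i_def Ob_def by simp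
qed

lemma inr_bound:
  fixes K :: "'a::euclidean_space set"
  assumes "compact K" "subspace L" "\<not> L \<subseteq> {0}" "c \<in> (+) x ` L" "cball c \<rho> \<inter> (+) x ` L \<subseteq> K" "\<rho> \<ge> 0"
  shows "\<rho> \<le> diameter K"
proof -
  obtain l where l: "l \<in> L" "l \<noteq> 0" using assms(3) by blast
  define e where "e = (1 / norm l) *\<^sub>R l"
  have eL: "e \<in> L" unfolding e_def using assms(2) l(1) by (simp add: subspace_scale)
  have ne: "norm e = 1" unfolding e_def using l(2) by simp
  obtain l0 where l0: "l0 \<in> L" "c = x + l0" using assms(4) by blast
  have "c + \<rho> *\<^sub>R e = x + (l0 + \<rho> *\<^sub>R e)" "c - \<rho> *\<^sub>R e = x + (l0 - \<rho> *\<^sub>R e)"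
    using l0 by (simp_all add: algebra_simps)
  moreover have "l0 + \<rho> *\<^sub>R e \<in> L" "l0 - \<rho> *\<^sub>R e \<in> L"
    using assms(2) l0(1) eL by (simp_all add: subspace_add subspace_diff subspace_scale)
  ultimately have inA: "c + \<rho> *\<^sub>R e \<in> (+) x ` L" "c - \<rho> *\<^sub>R e \<in> (+) x ` L" by auto
  have "c + \<rho> *\<^sub>R e \<in> cball c \<rho>" "c - \<rho> *\<^sub>R e \<in> cball c \<rho>"
    using ne assms(6) by (simp_all add: dist_norm)
  hence "c + \<rho> *\<^sub>R e \<in> K" "c - \<rho> *\<^sub>R e \<in> K" using inA assms(5) by blast+
  hence "dist (c + \<rho> *\<^sub>R e) (c - \<rho> *\<^sub>R e) \<le> diameter K"
    using diameter_bounded_bound compact_imp_bounded assms(1) by blast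
  moreover have "dist (c + \<rho> *\<^sub>R e) (c - \<rho> *\<^sub>R e) = 2 * \<rho>"
  proof -
    have "(2 * \<rho>) *\<^sub>R e = 2 *\<^sub>R (\<rho> *\<^sub>R e)" by simp
    also have "\<dots> = \<rho> *\<^sub>R e + \<rho> *\<^sub>R e" by (rule scaleR_2)
    finally have "(c + \<rho> *\<^sub>R e) - (c - \<rho> *\<^sub>R e) = (2 * \<rho>) *\<^sub>R e" by (simp add: algebra_simps)
    thus ?thesis using ne assms(6) by (simp add: dist_norm)
  qed
  ultimately show ?thesis using assms(6) by simp
qed

lemma inradius_bound:
  fixes K :: "'a::euclidean_space set"
  assumes "compact K" "subspace L" "\<not> L \<subseteq> {0}"
  shows "inradius_in (K \<inter> (+) x ` L) ((+) x ` L) \<le> diameter K"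
proof (cases "K \<inter> (+) x ` L = {}")
  case True thus ?thesis
    using diameter_ge_0[OF compact_imp_bounded[OF assms(1)]] by (simp add: inradius_in_def)
next
  case False
  then obtain q where q: "q \<in> K" "q \<in> (+) x ` L" by blast
  let ?S = "{r. r \<ge> 0 \<and> (\<exists>c\<in>(+) x ` L. cball c r \<inter> (+) x ` L \<subseteq> K \<inter> (+) x ` L)}"
  have "0 \<in> ?S" using q by (intro CollectI conjI bexI[of _ q]) auto
  hence "Sup ?S \<le> diameter K"
    by (intro cSup_least) (use inr_bound[OF assms] in blast)+
  thus ?thesis using False by (simp add: inradius_in_def)
qed

lemma r_i_ge:
  fixes K :: "'a::euclidean_space set"
  assumes "compact K" "DIM('a) \<ge> 2" "norm \<nu> = 1" "\<rho> \<ge> 0"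
    and sec: "\<And>y. inner \<nu> (y - c) = 0 \<Longrightarrow> norm (y - c) \<le> \<rho> \<Longrightarrow> y \<in> K"
  shows "\<rho> \<le> r_i (DIM('a) - 1) K"
proof -
  define L where "L = {y. inner \<nu> y = 0}"
  have nu0: "\<nu> \<noteq> 0" using assms(3) by auto
  have Lsub: "L \<in> lin_subspaces (DIM('a) - 1)"
    unfolding lin_subspaces_def L_def using dim_hyperplane[OF nu0] subspace_hyperplane by blast
  have nz: "\<not> L' \<subseteq> {0}" if "L' \<in> lin_subspaces (DIM('a) - 1)" for L'
  proof
    assume "L' \<subseteq> {0}"
    hence "dim L' = 0" by (simp only: dim_eq_0)
    moreover have "dim L' = DIM('a) - 1" using that unfolding lin_subspaces_def by simp
    ultimately show False using assms(2) by simp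
  qed
  define Ob where "Ob = {inradius_in (K \<inter> ((+) x ` L)) ((+) x ` L) | L x.
                  L \<in> lin_subspaces (DIM('a) - 1) \<and> x \<in> orthogonal_comp L}"
  have bO: "bdd_above Ob" unfolding bdd_above_def Ob_def
    using inradius_bound[OF assms(1)] nz unfolding lin_subspaces_def by blast
  define x0 where "x0 = (inner c \<nu>) *\<^sub>R \<nu>"
  have nn: "inner \<nu> \<nu> = 1" using assms(3) by (simp add: dot_square_norm)
  have x0o: "x0 \<in> orthogonal_comp L"
    unfolding orthogonal_comp_def orthogonal_def L_def x0_def by (simp add: inner_commute)
  let ?A = "(+) x0 ` L"
  have cA: "c \<in> ?A"
  proof
    show "c = x0 + (c - x0)" by simp
    show "c - x0 \<in> L" unfolding L_def x0_def by (simp add: inner_diff_right nn inner_commute)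
  qed
  have sub: "cball c \<rho> \<inter> ?A \<subseteq> K \<inter> ?A"
  proof
    fix y assume y: "y \<in> cball c \<rho> \<inter> ?A"
    then obtain l where l: "l \<in> L" "y = x0 + l" by blast
    have "inner \<nu> (y - c) = 0"
      using l unfolding L_def x0_def by (simp add: inner_diff_right inner_add_right nn inner_commute)
    moreover have "norm (y - c) \<le> \<rho>" using y by (simp add: dist_norm norm_minus_commute)
    ultimately show "y \<in> K \<inter> ?A" using sec y by blast
  qed
  let ?S = "{r. r \<ge> 0 \<and> (\<exists>c\<in>?A. cball c r \<inter> ?A \<subseteq> K \<inter> ?A)}"
  have rS: "\<rho> \<in> ?S" using sub cA assms(4) by blast
  have "c \<in> cball c \<rho>" using assms(4) by simp
  hence ne: "K \<inter> ?A \<noteq> {}" using sub cA by blast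
  have "\<rho> \<le> Sup ?S"
  proof (rule cSup_upper[OF rS])
    have sL: "subspace L" and nzL: "\<not> L \<subseteq> {0}" using Lsub nz[OF Lsub] by (auto simp: lin_subspaces_def)
    show "bdd_above ?S"
    proof (rule bdd_aboveI[where M="diameter K"])
      fix r assume "r \<in> ?S"
      then obtain c' where "r \<ge> 0" "c' \<in> ?A" "cball c' r \<inter> ?A \<subseteq> K \<inter> ?A" by blast
      thus "r \<le> diameter K" using inr_bound[OF assms(1) sL nzL, of c' x0 r] by blast
    qed
  qed
  also have "\<dots> = inradius_in (K \<inter> ?A) ?A" using ne by (simp add: inradius_in_def)
  also have "\<dots> \<le> Sup Ob" by (rule cSup_upper[OF _ bO]) (use Lsub x0o in \<open>auto simp: Ob_def\<close>)
  finally show ?thesis unfolding r_i_def Ob_def .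
qed



definition Pn :: "'a::euclidean_space \<Rightarrow> 'a \<Rightarrow> 'a" where
  "Pn \<nu> w = w - (inner w \<nu>) *\<^sub>R \<nu>"

lemma Pn_decomp: "norm \<nu> = 1 \<Longrightarrow> inner w v = inner (Pn \<nu> w) v + inner w \<nu> * inner \<nu> v"
  by (simp add: Pn_def inner_diff_left)

lemma cont_Pn: "continuous_on S (\<lambda>w. norm (Pn \<nu> w))"
  unfolding Pn_def by (intro continuous_intros)

lemma Pn_norm2:
  assumes "norm \<nu> = 1"
  shows "(norm (Pn \<nu> w))\<^sup>2 = (norm w)\<^sup>2 - (inner w \<nu>)\<^sup>2"
proof -
  have nn: "inner \<nu> \<nu> = 1" using assms by (simp add: dot_square_norm)
  define a where "a = inner w \<nu>"
  have "inner (w - a *\<^sub>R \<nu>) (w - a *\<^sub>R \<nu>) = inner w w - a * inner w \<nu> - a * inner \<nu> w + a * a * inner \<nu> \<nu>"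
    by (simp add: inner_diff_left inner_diff_right algebra_simps)
  also have "\<dots> = inner w w - a * a" using nn by (simp add: a_def inner_commute)
  finally show ?thesis unfolding Pn_def power2_norm_eq_inner a_def[symmetric]
    by (simp add: power2_eq_square)
qed

lemma Pn_le:
  assumes "norm \<nu> = 1"
  shows "norm (Pn \<nu> w) \<le> norm w"
proof -
  have "(norm (Pn \<nu> w))\<^sup>2 \<le> (norm w)\<^sup>2" using Pn_norm2[OF assms, of w] by simp
  thus ?thesis by (rule power2_le_imp_le) simp
qed


lemma duality:
  fixes K :: "'a::euclidean_space set"
  assumes K: "compact K" "convex K" "K \<noteq> {}"
    and nu: "norm \<nu> = 1"
    and W: "compact W" "W \<subseteq> sphere 0 1" "w0 \<in> W" "-w0 \<in> W"
    and sep: "\<And>c. \<exists>c'. (\<forall>w\<in>W. inner c' w = inner c w) \<and>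
                (\<forall>y. inner \<nu> (y - c') = 0 \<longrightarrow> y \<notin> K \<longrightarrow> (\<exists>w\<in>W. inner w y > hsupp K w))"
    and mx: "\<And>c \<rho>. \<rho> \<ge> 0 \<Longrightarrow> (\<And>y. inner \<nu> (y - c) = 0 \<Longrightarrow> norm (y - c) \<le> \<rho> \<Longrightarrow> y \<in> K) \<Longrightarrow> \<rho> \<le> r"
  shows "\<exists>S u. finite S \<and> S \<subseteq> (\<lambda>w. (w, hsupp K w - r * norm (Pn \<nu> w))) ` W \<and> card S \<le> DIM('a) + 2
     \<and> (\<forall>z\<in>S. 0 \<le> u z) \<and> sum u S = 1 \<and> (\<Sum>z\<in>S. u z *\<^sub>R fst z) = 0 \<and> (\<Sum>z\<in>S. u z * snd z) \<le> 0"
proof -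
  define g where "g w = hsupp K w - r * norm (Pn \<nu> w)" for w
  define G where "G = (\<lambda>w. (w, g w)) ` W"
  have contg: "continuous_on W g" unfolding g_def
    by (intro continuous_intros hsupp_cont[OF K(1,3)] cont_Pn)
  have cG: "compact G" unfolding G_def
    by (rule compact_continuous_image[OF _ W(1)]) (intro continuous_intros contg)
  define T where "T = {0::'a} \<times> {..(0::real)}"
  have cT: "closed T" "convex T" unfolding T_def by (auto intro: closed_Times convex_Times)
  have "convex hull G \<inter> T \<noteq> {}"
  proof
    assume dis: "convex hull G \<inter> T = {}"
    have "G \<noteq> {}" using W(3) unfolding G_def by blast
    hence hne: "convex hull G \<noteq> {}" by simp
    have dis2: "T \<inter> convex hull G = {}" using dis by blast
    obtain a b where ab: "\<forall>x\<in>T. inner a x < b" "\<forall>x\<in>convex hull G. inner a x > b"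
      using separating_hyperplane_closed_compact[OF cT(2) cT(1) convex_convex_hull
          compact_convex_hull[OF cG] hne dis2] by blast
    obtain a1 \<alpha> where a: "a = (a1, \<alpha>)" by (cases a)
    have Tt: "\<alpha> * t < b" if "t \<le> 0" for t
      using ab(1) that unfolding T_def a by auto
    have b0: "0 < b" using Tt[of 0] by simp
    have al: "\<alpha> \<ge> 0"
    proof (rule ccontr)
      assume "\<not> \<alpha> \<ge> 0"
      hence "\<alpha> < 0" by simp
      hence "b / \<alpha> \<le> 0" using b0 by (simp add: divide_pos_neg less_imp_le)
      from Tt[OF this] show False using \<open>\<alpha> < 0\<close> by simp
    qed
    have Gw: "inner a1 w + \<alpha> * g w > b" if "w \<in> W" for w
    proof -
      have "(w, g w) \<in> convex hull G" using that unfolding G_def by (intro hull_inc) blast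
      thus ?thesis using ab(2) unfolding a by auto
    qed
    have al0: "\<alpha> > 0"
    proof (rule ccontr)
      assume "\<not> \<alpha> > 0"
      hence "\<alpha> = 0" using al by simp
      hence "inner a1 w0 > 0" "inner a1 (-w0) > 0" using Gw[OF W(3)] Gw[OF W(4)] b0 by auto
      thus False by simp
    qed
    define c where "c = - (1 / \<alpha>) *\<^sub>R a1"
    define f where "f w = g w - inner c w" for w
    have fpos: "f w > 0" if "w \<in> W" for w
    proof -
      have "f w = (inner a1 w + \<alpha> * g w) / \<alpha>" unfolding f_def c_def using al0
        by (simp add: field_simps)
      thus ?thesis using Gw[OF that] b0 al0 by simp
    qed
    have contf: "continuous_on W f" unfolding f_def by (intro continuous_intros contg)
    obtain w1 where w1: "w1 \<in> W" "\<forall>w\<in>W. f w1 \<le> f w"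
      using continuous_attains_inf[OF W(1) _ contf] W(3) by blast
    define \<delta> where "\<delta> = f w1"
    have d0: "\<delta> > 0" using fpos[OF w1(1)] unfolding \<delta>_def .
    obtain c' where c': "\<forall>w\<in>W. inner c' w = inner c w"
       "\<forall>y. inner \<nu> (y - c') = 0 \<longrightarrow> y \<notin> K \<longrightarrow> (\<exists>w\<in>W. inner w y > hsupp K w)"
      using sep[of c] by blast
    obtain k0 where k0: "k0 \<in> K" using K(3) by blast
    have r0: "0 \<le> r"
    proof (rule mx[of 0 k0])
      fix y assume "norm (y - k0) \<le> 0"
      thus "y \<in> K" using k0 by simp
    qed simp
    have "r + \<delta> \<le> r"
    proof (rule mx[of "r + \<delta>" c'])
      show "0 \<le> r + \<delta>" using r0 d0 by simp
      fix y assume y: "inner \<nu> (y - c') = 0" "norm (y - c') \<le> r + \<delta>"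
      show "y \<in> K"
      proof (rule ccontr)
        assume "y \<notin> K"
        then obtain w where w: "w \<in> W" "inner w y > hsupp K w" using c'(2) y(1) by blast
        have nw: "norm w = 1" using W(2) w(1) by auto
        have pw: "norm (Pn \<nu> w) \<le> 1" using Pn_le[OF nu, of w] nw by simp
        have "inner w y = inner w c' + inner w (y - c')" by (simp add: inner_diff_right)
        also have "inner w (y - c') = inner (Pn \<nu> w) (y - c')"
          using Pn_decomp[OF nu, of w "y - c'"] y(1) by simp
        also have "\<dots> \<le> norm (Pn \<nu> w) * norm (y - c')" by (rule norm_cauchy_schwarz)
        also have "\<dots> \<le> norm (Pn \<nu> w) * (r + \<delta>)" using y(2) by (simp add: mult_left_mono)
        also have "\<dots> \<le> norm (Pn \<nu> w) * r + \<delta>" using pw d0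
          by (simp add: distrib_left mult_left_le_one_le less_imp_le)
        finally have "inner w y \<le> inner c w + r * norm (Pn \<nu> w) + \<delta>"
          using c'(1) w(1) by (simp add: inner_commute mult.commute)
        moreover have "\<delta> \<le> f w" using w1(2) w(1) unfolding \<delta>_def by blast
        ultimately have "inner w y \<le> hsupp K w" unfolding f_def g_def by simp
        thus False using w(2) by simp
      qed
    qed
    thus False using d0 by simp
  qed
  then obtain q where q: "q \<in> convex hull G" "q \<in> T" by blast
  then obtain S where S: "finite S" "S \<subseteq> G" "card S \<le> DIM('a \<times> real) + 1" "q \<in> convex hull S"
    using caratheodory[of G] by blast
  then obtain u where u: "\<forall>x\<in>S. 0 \<le> u x" "sum u S = 1" "(\<Sum>x\<in>S. u x *\<^sub>R x) = q"
    using convex_hull_finite[OF S(1)] by blast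
  have "fst q = 0" "snd q \<le> 0" using q(2) unfolding T_def by auto
  hence "(\<Sum>z\<in>S. u z *\<^sub>R fst z) = 0" "(\<Sum>z\<in>S. u z * snd z) \<le> 0"
    using u(3) by (auto simp: fst_sum snd_sum)
  moreover have "card S \<le> DIM('a) + 2" using S(3) by simp
  ultimately show ?thesis using S u unfolding G_def g_def by blast
qed



lemma greedy_signs:
  fixes f :: "'b \<Rightarrow> 'a::real_inner"
  assumes "finite S"
  shows "\<exists>\<epsilon>. (\<forall>z. \<epsilon> z = 1 \<or> \<epsilon> z = -1) \<and>
     (\<Sum>z\<in>S. (norm (f z))\<^sup>2) \<le> (norm (\<Sum>z\<in>S. \<epsilon> z *\<^sub>R f z))\<^sup>2"
  using assms
proof (induction S rule: finite_induct)
  case empty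
  show ?case by (rule exI[of _ "\<lambda>_. 1"]) simp
next
  case (insert x F)
  then obtain \<epsilon> where e: "\<forall>z. \<epsilon> z = 1 \<or> \<epsilon> z = -1"
     "(\<Sum>z\<in>F. (norm (f z))\<^sup>2) \<le> (norm (\<Sum>z\<in>F. \<epsilon> z *\<^sub>R f z))\<^sup>2" by blast
  define s where "s = (\<Sum>z\<in>F. \<epsilon> z *\<^sub>R f z)"
  define \<sigma> :: real where "\<sigma> = (if inner s (f x) \<ge> 0 then 1 else -1)"
  define \<epsilon>' where "\<epsilon>' = \<epsilon>(x := \<sigma>)"
  have s': "(\<Sum>z\<in>F. \<epsilon>' z *\<^sub>R f z) = s" unfolding s_def \<epsilon>'_def
    using insert(2) by (intro sum.cong) auto
  have sig: "\<sigma> * inner s (f x) \<ge> 0" "\<sigma> * \<sigma> = 1" unfolding \<sigma>_def by auto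
  have "(norm (s + \<sigma> *\<^sub>R f x))\<^sup>2 = (norm s)\<^sup>2 + 2 * (\<sigma> * inner s (f x)) + \<sigma> * \<sigma> * (norm (f x))\<^sup>2"
    unfolding power2_norm_eq_inner by (simp add: inner_add_left inner_add_right inner_commute algebra_simps)
  hence "(norm (s + \<sigma> *\<^sub>R f x))\<^sup>2 \<ge> (norm s)\<^sup>2 + (norm (f x))\<^sup>2" using sig by simp
  moreover have "(\<Sum>z\<in>insert x F. \<epsilon>' z *\<^sub>R f z) = \<sigma> *\<^sub>R f x + s"
    using insert(1,2) s' by (simp add: \<epsilon>'_def)
  moreover have "(\<Sum>z\<in>insert x F. (norm (f z))\<^sup>2) = (norm (f x))\<^sup>2 + (\<Sum>z\<in>F. (norm (f z))\<^sup>2)"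
    using insert(1,2) by simp
  moreover have "\<forall>z. \<epsilon>' z = 1 \<or> \<epsilon>' z = -1" using e(1) unfolding \<epsilon>'_def \<sigma>_def by auto
  ultimately show ?case using e(2) unfolding s_def[symmetric]
    by (intro exI[of _ \<epsilon>']) (simp add: add.commute)
qed

lemma linear_Pn: "linear (Pn \<nu>)"
  by (rule linearI) (simp_all add: Pn_def inner_add_left algebra_simps)

lemma norm_orth2:
  fixes \<nu> e :: "'a::real_inner"
  assumes "norm \<nu> = 1" "norm e = 1" "inner \<nu> e = 0"
  shows "(norm (a *\<^sub>R \<nu> + b *\<^sub>R e))\<^sup>2 = a\<^sup>2 + b\<^sup>2"
proof -
  have nn: "inner \<nu> \<nu> = 1" "inner e e = 1" using assms by (simp_all add: dot_square_norm)
  have ev: "inner e \<nu> = 0" using assms(3) by (simp add: inner_commute)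
  show ?thesis unfolding power2_norm_eq_inner
    by (simp add: inner_add_left inner_add_right nn ev assms(3) power2_eq_square)
qed

lemma cs_sum:
  fixes a :: "'b \<Rightarrow> real"
  shows "(sum a S)\<^sup>2 \<le> real (card S) * (\<Sum>z\<in>S. (a z)\<^sup>2)"
  using Cauchy_Schwarz_ineq_sum[of a "\<lambda>_. 1" S] by (simp add: mult.commute)



lemma final_ineq:
  fixes d1 d2 s t W1 H :: real
  assumes "s > 0" "W1 \<ge> 0" "H \<ge> 0" "\<bar>d1\<bar> \<le> W1 / 2" "\<bar>s * d2 + t * d1\<bar> \<le> H / 2"
    and "W1\<^sup>2 * (s\<^sup>2 + t\<^sup>2) \<le> H\<^sup>2" "\<bar>t\<bar> * W1 \<le> H"
  shows "d1\<^sup>2 + d2\<^sup>2 \<le> (H / s)\<^sup>2"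
proof -
  have b2: "\<bar>s * d2\<bar> \<le> H / 2 + \<bar>t\<bar> * W1 / 2"
  proof -
    have "\<bar>s * d2\<bar> \<le> \<bar>s * d2 + t * d1\<bar> + \<bar>t * d1\<bar>" by linarith
    also have "\<bar>t * d1\<bar> \<le> \<bar>t\<bar> * (W1 / 2)" unfolding abs_mult
      by (rule mult_left_mono) (use assms(4) in auto)
    finally show ?thesis using assms(5) by simp
  qed
  have "(s * d2)\<^sup>2 \<le> (H / 2 + \<bar>t\<bar> * W1 / 2)\<^sup>2"
    using b2 by (metis abs_ge_zero power2_abs power_mono)
  moreover have "d1\<^sup>2 \<le> (W1 / 2)\<^sup>2" using assms(4) by (metis abs_ge_zero power2_abs power_mono)
  ultimately have "s\<^sup>2 * (d1\<^sup>2 + d2\<^sup>2) \<le> s\<^sup>2 * (W1/2)\<^sup>2 + (H / 2 + \<bar>t\<bar> * W1 / 2)\<^sup>2"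
  proof -
    assume a1: "(s * d2)\<^sup>2 \<le> (H / 2 + \<bar>t\<bar> * W1 / 2)\<^sup>2" and a2: "d1\<^sup>2 \<le> (W1 / 2)\<^sup>2"
    have "s\<^sup>2 * d1\<^sup>2 \<le> s\<^sup>2 * (W1/2)\<^sup>2" using a2 by (simp add: mult_left_mono)
    moreover have "s\<^sup>2 * (d1\<^sup>2 + d2\<^sup>2) = s\<^sup>2 * d1\<^sup>2 + (s * d2)\<^sup>2" by (simp add: algebra_simps power_mult_distrib)
    ultimately show ?thesis using a1 by linarith
  qed
  also have "\<dots> = (W1\<^sup>2 * (s\<^sup>2 + t\<^sup>2) + H\<^sup>2 + 2 * H * (\<bar>t\<bar> * W1)) / 4"
    by (simp add: power2_eq_square algebra_simps)
  also have "\<dots> \<le> (H\<^sup>2 + H\<^sup>2 + 2 * H * H) / 4"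
    using assms(6,7,3) by (intro divide_right_mono add_mono mult_left_mono) auto
  also have "\<dots> = s\<^sup>2 * (H / s)\<^sup>2" using assms(1) by (simp add: power2_eq_square field_simps)
  finally show ?thesis using assms(1) by simp
qed



theorem theorem1p3:
  fixes K :: "'a::euclidean_space set"
  assumes "DIM('a) \<ge> 2"
    and "convex_body K"
    and "r_i (DIM('a) - 1) K > 0"
  shows "R_i 2 K / r_i (DIM('a) - 1) K \<le> 2 * sqrt 2 * sqrt (DIM('a))"
proof -
  define n where "n = DIM('a)"
  define rs where "rs = r_i (DIM('a) - 1) K"
  have K: "compact K" "convex K" "K \<noteq> {}" using assms(2) unfolding convex_body_def by auto
  have rs0: "rs > 0" using assms(3) unfolding rs_def .
  define h where "h = hsupp K"
  define wd where "wd w = h w + h (-w)" for w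
  have hc: "continuous_on UNIV h" unfolding h_def using hsupp_cont[OF K(1,3)] .
  have hge: "inner w x \<le> h w" if "x \<in> K" for w x unfolding h_def using hsupp_ge[OF K(1) that] .
  have hat: "\<exists>x\<in>K. inner w x = h w" for w unfolding h_def using hsupp_attain[OF K(1,3)] .
  have wdc: "continuous_on (sphere 0 1) wd" unfolding wd_def
    by (intro continuous_intros continuous_on_subset[OF hc] continuous_on_compose2[OF hc]) auto
  obtain \<nu> where nu: "\<nu> \<in> sphere 0 1" "\<forall>w\<in>sphere 0 1. wd \<nu> \<le> wd w"
  proof -
    have "sphere (0::'a) 1 \<noteq> {}" by (simp add: sphere_eq_empty)
    thus ?thesis using continuous_attains_inf[OF compact_sphere _ wdc] that by blast
  qed
  have nun: "norm \<nu> = 1" using nu(1) by simp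
  have nn: "inner \<nu> \<nu> = 1" using nun by (simp add: dot_square_norm)
  have wd0: "wd \<nu> \<ge> 0"
  proof -
    obtain x where "x \<in> K" using K(3) by blast
    hence "inner \<nu> x \<le> h \<nu>" "inner (-\<nu>) x \<le> h (-\<nu>)" using hge by blast+
    thus ?thesis unfolding wd_def by simp
  qed
  obtain e0 where e0: "norm e0 = 1" "inner \<nu> e0 = 0"
  proof -
    have nu0: "\<nu> \<noteq> 0" using nun by auto
    have "dim {y. inner \<nu> y = 0} = n - 1" using dim_hyperplane[OF nu0] unfolding n_def .
    hence "dim {y. inner \<nu> y = 0} \<noteq> 0" using assms(1) unfolding n_def by simp
    hence "\<not> {y. inner \<nu> y = 0} \<subseteq> {0}" by (simp only: dim_eq_0 not_False_eq_True)
    then obtain l where l: "inner \<nu> l = 0" "l \<noteq> 0" by blast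
    show ?thesis by (rule that[of "(1 / norm l) *\<^sub>R l"]) (use l in auto)
  qed
  have Kc: "closed K" using K(1) by (simp add: compact_imp_closed)
  obtain W where W: "compact W" "W \<subseteq> sphere 0 1" "e0 \<in> W" "-e0 \<in> W"
    and sepW: "\<And>c. \<exists>c'. (\<forall>w\<in>W. inner c' w = inner c w) \<and>
                (\<forall>y. inner \<nu> (y - c') = 0 \<longrightarrow> y \<notin> K \<longrightarrow> (\<exists>w\<in>W. inner w y > hsupp K w))"
    and degW: "wd \<nu> = 0 \<Longrightarrow> \<forall>w\<in>W. inner \<nu> w = 0"
  proof (cases "wd \<nu> = 0")
    case True
    define W where "W = sphere 0 1 \<inter> {w. inner \<nu> w = 0}"
    have flat: "inner \<nu> x = h \<nu>" if "x \<in> K" for x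
      using hge[OF that, of \<nu>] hge[OF that, of "-\<nu>"] True unfolding wd_def by simp
    show ?thesis
    proof (rule that[of W])
      show "compact W" unfolding W_def by (intro compact_Int_closed compact_sphere closed_hyperplane)
      show "W \<subseteq> sphere 0 1" unfolding W_def by blast
      show "e0 \<in> W" "-e0 \<in> W" unfolding W_def using e0 by auto
      show "wd \<nu> = 0 \<Longrightarrow> \<forall>w\<in>W. inner \<nu> w = 0" unfolding W_def by blast
      fix c
      define c' where "c' = c + (h \<nu> - inner \<nu> c) *\<^sub>R \<nu>"
      have "\<forall>w\<in>W. inner c' w = inner c w" unfolding W_def c'_def by (auto simp: inner_add_left)
      moreover have "\<forall>y. inner \<nu> (y - c') = 0 \<longrightarrow> y \<notin> K \<longrightarrow> (\<exists>w\<in>W. inner w y > hsupp K w)"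
      proof (intro allI impI)
        fix y assume y: "inner \<nu> (y - c') = 0" "y \<notin> K"
        have yh: "inner \<nu> y = h \<nu>" using y(1) unfolding c'_def by (simp add: inner_diff_right inner_add_right nn)
        obtain a b where ab: "inner a y < b" "\<forall>x\<in>K. inner a x > b"
          using separating_hyperplane_closed_point[OF K(2) Kc y(2)] by blast
        define pa where "pa = Pn \<nu> a"
        have dec: "inner a z = inner pa z + inner a \<nu> * h \<nu>" if "inner \<nu> z = h \<nu>" for z
          using Pn_decomp[OF nun, of a z] that unfolding pa_def by simp
        have lt: "inner pa y < inner pa x" if "x \<in> K" for x
          using ab dec[OF yh] dec[OF flat[OF that]] that by force
        have pa0: "pa \<noteq> 0" using lt K(3) by force
        define w where "w = - (1 / norm pa) *\<^sub>R pa"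
        have wn: "norm w = 1" unfolding w_def using pa0 by simp
        have wo: "inner \<nu> w = 0" unfolding w_def pa_def Pn_def
          by (simp add: inner_diff_right nn inner_commute)
        obtain x where x: "x \<in> K" "inner w x = hsupp K w" using hsupp_attain[OF K(1,3)] by blast
        have "inner w x < inner w y" unfolding w_def using lt[OF x(1)] pa0 by (simp add: divide_simps)
        thus "\<exists>w\<in>W. inner w y > hsupp K w" using x wn wo unfolding W_def by (intro bexI[of _ w]) auto
      qed
      ultimately show "\<exists>c'. (\<forall>w\<in>W. inner c' w = inner c w) \<and>
                (\<forall>y. inner \<nu> (y - c') = 0 \<longrightarrow> y \<notin> K \<longrightarrow> (\<exists>w\<in>W. inner w y > hsupp K w))" by blast
    qed
  next
    case False
    show ?thesis
    proof (rule that[of "sphere 0 1"])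
      show "compact (sphere (0::'a) 1)" by (rule compact_sphere)
      show "e0 \<in> sphere 0 1" "-e0 \<in> sphere 0 1" using e0 by auto
      show "wd \<nu> = 0 \<Longrightarrow> \<forall>w\<in>sphere 0 1. inner \<nu> w = 0" using False by blast
      fix c
      have "\<forall>y. inner \<nu> (y - c) = 0 \<longrightarrow> y \<notin> K \<longrightarrow> (\<exists>w\<in>sphere 0 1. inner w y > hsupp K w)"
      proof (intro allI impI)
        fix y assume y: "inner \<nu> (y - c) = 0" "y \<notin> K"
        obtain a b where ab: "inner a y < b" "\<forall>x\<in>K. inner a x > b"
          using separating_hyperplane_closed_point[OF K(2) Kc y(2)] by blast
        have lt: "inner a y < inner a x" if "x \<in> K" for x using ab that by force
        have pa0: "a \<noteq> 0" using lt K(3) by force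
        define w where "w = - (1 / norm a) *\<^sub>R a"
        have wn: "norm w = 1" unfolding w_def using pa0 by simp
        obtain x where x: "x \<in> K" "inner w x = hsupp K w" using hsupp_attain[OF K(1,3)] by blast
        have "inner w x < inner w y" unfolding w_def using lt[OF x(1)] pa0 by (simp add: divide_simps)
        thus "\<exists>w\<in>sphere 0 1. inner w y > hsupp K w" using x wn by (intro bexI[of _ w]) auto
      qed
      thus "\<exists>c'. (\<forall>w\<in>sphere 0 1. inner c' w = inner c w) \<and>
                (\<forall>y. inner \<nu> (y - c') = 0 \<longrightarrow> y \<notin> K \<longrightarrow> (\<exists>w\<in>sphere 0 1. inner w y > hsupp K w))" by blast
    qed simp
  qed
  have mx: "\<rho> \<le> rs" if "\<rho> \<ge> 0" "\<And>y. inner \<nu> (y - c) = 0 \<Longrightarrow> norm (y - c) \<le> \<rho> \<Longrightarrow> y \<in> K" for c \<rho>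
    unfolding rs_def using r_i_ge[OF K(1) assms(1) nun that(1), where c=c] that(2) by simp
  obtain S u where Su: "finite S" "S \<subseteq> (\<lambda>w. (w, hsupp K w - rs * norm (Pn \<nu> w))) ` W"
     "card S \<le> DIM('a) + 2" "\<forall>z\<in>S. 0 \<le> u z" "sum u S = 1" "(\<Sum>z\<in>S. u z *\<^sub>R fst z) = 0"
     "(\<Sum>z\<in>S. u z * snd z) \<le> 0"
  proof -
    have d: "\<exists>S u. finite S \<and> S \<subseteq> (\<lambda>w. (w, hsupp K w - rs * norm (Pn \<nu> w))) ` W \<and> card S \<le> DIM('a) + 2
     \<and> (\<forall>z\<in>S. 0 \<le> u z) \<and> sum u S = 1 \<and> (\<Sum>z\<in>S. u z *\<^sub>R fst z) = 0 \<and> (\<Sum>z\<in>S. u z * snd z) \<le> 0"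
      apply (rule duality[OF K nun W sepW])
      apply (rule mx)
       apply assumption
      apply assumption
      done
    from d obtain S u where "finite S \<and> S \<subseteq> (\<lambda>w. (w, hsupp K w - rs * norm (Pn \<nu> w))) ` W \<and> card S \<le> DIM('a) + 2
     \<and> (\<forall>z\<in>S. 0 \<le> u z) \<and> sum u S = 1 \<and> (\<Sum>z\<in>S. u z *\<^sub>R fst z) = 0 \<and> (\<Sum>z\<in>S. u z * snd z) \<le> 0"
      by (elim exE)
    thus thesis using that by (elim conjE)
  qed
  define p where "p w = norm (Pn \<nu> w)" for w
  have zW: "fst z \<in> W" "snd z = h (fst z) - rs * p (fst z)" if "z \<in> S" for z
    using Su(2) that unfolding h_def p_def by auto
  have zn: "norm (fst z) = 1" if "z \<in> S" for z using zW(1)[OF that] W(2) by auto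
  define H where "H = (\<Sum>z\<in>S. u z * h (fst z))"
  define \<Lambda> where "\<Lambda> = (\<Sum>z\<in>S. u z * p (fst z))"
  have "(\<Sum>z\<in>S. u z * snd z) = H - rs * \<Lambda>"
    unfolding H_def \<Lambda>_def sum_distrib_left sum_subtractf[symmetric]
    by (intro sum.cong) (auto simp: zW algebra_simps)
  hence HL: "H \<le> rs * \<Lambda>" using Su(7) by simp
  have slack: "(\<Sum>z\<in>S. u z * (h (fst z) - inner (fst z) x)) = H" for x
  proof -
    have "(\<Sum>z\<in>S. u z * (h (fst z) - inner (fst z) x)) = H - (\<Sum>z\<in>S. u z * inner (fst z) x)"
      unfolding H_def sum_subtractf[symmetric] by (simp add: algebra_simps)
    also have "(\<Sum>z\<in>S. u z * inner (fst z) x) = inner (\<Sum>z\<in>S. u z *\<^sub>R fst z) x"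
      by (simp add: inner_sum_left)
    finally show ?thesis using Su(6) by simp
  qed
  have slack_nn: "0 \<le> u z * (h (fst z) - inner (fst z) x)" if "z \<in> S" "x \<in> K" for z x
    using Su(4) that hge[OF that(2), of "fst z"] by simp
  have L0: "\<Lambda> \<ge> 0" unfolding \<Lambda>_def p_def using Su(4) by (intro sum_nonneg) simp
  have Lpos: "\<Lambda> > 0"
  proof (rule ccontr)
    assume "\<not> \<Lambda> > 0"
    hence L00: "\<Lambda> = 0" using L0 by simp
    have nnz: "0 \<le> u z * p (fst z)" if "z \<in> S" for z using Su(4) that unfolding p_def by simp
    have "sum (\<lambda>z. u z * p (fst z)) S = 0" using L00 unfolding \<Lambda>_def .
    hence each: "\<forall>z\<in>S. u z * p (fst z) = 0" using sum_nonneg_eq_0_iff[OF Su(1), of "\<lambda>z. u z * p (fst z)"] nnz by blast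
    obtain z0 where z0: "z0 \<in> S" "u z0 > 0"
    proof (rule ccontr)
      assume nt: "\<not> thesis"
      have "\<forall>z\<in>S. u z = 0"
      proof
        fix z assume z: "z \<in> S"
        show "u z = 0"
        proof (rule ccontr)
          assume "u z \<noteq> 0"
          hence "u z > 0" using Su(4) z by (simp add: less_le)
          thus False using that[OF z] nt by blast
        qed
      qed
      hence "sum u S = 0" by simp
      thus False using Su(5) by simp
    qed
    define w0 where "w0 = fst z0"
    have "p w0 = 0" using each z0 unfolding w0_def by auto
    hence w0eq: "w0 = inner w0 \<nu> *\<^sub>R \<nu>" unfolding p_def Pn_def by simp
    have w0n: "norm w0 = 1" using zn[OF z0(1)] unfolding w0_def .
    have t0: "inner w0 \<nu> \<noteq> 0"
    proof
      assume "inner w0 \<nu> = 0"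
      hence "w0 = 0" using w0eq by simp
      thus False using w0n by simp
    qed
    show False
    proof (cases "wd \<nu> = 0")
      case True
      hence "inner \<nu> w0 = 0" using degW zW(1)[OF z0(1)] unfolding w0_def by blast
      thus False using t0 by (simp add: inner_commute)
    next
      case False
      hence wdp: "wd \<nu> > 0" using wd0 by simp
      obtain xa where xa: "xa \<in> K" "inner \<nu> xa = h \<nu>" using hat by blast
      obtain ya where ya: "ya \<in> K" "inner (-\<nu>) ya = h (-\<nu>)" using hat by blast
      have Hle: "H \<le> 0" using HL L00 by simp
      have zero: "u z0 * (h w0 - inner w0 x) = 0" if "x \<in> K" for x
      proof -
        have "0 \<le> (\<Sum>z\<in>S. u z * (h (fst z) - inner (fst z) x))"
          by (rule sum_nonneg) (use slack_nn that in blast)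
        hence "(\<Sum>z\<in>S. u z * (h (fst z) - inner (fst z) x)) = 0"
          using slack[of x] Hle by linarith
        hence "\<forall>z\<in>S. u z * (h (fst z) - inner (fst z) x) = 0"
          using sum_nonneg_eq_0_iff[OF Su(1), of "\<lambda>z. u z * (h (fst z) - inner (fst z) x)"]
             slack_nn[OF _ that] by blast
        thus ?thesis using z0(1) unfolding w0_def by blast
      qed
      have "inner w0 xa = h w0" "inner w0 ya = h w0" using zero[OF xa(1)] zero[OF ya(1)] z0(2) by auto
      hence "inner w0 (xa - ya) = 0" by (simp add: inner_diff_right)
      moreover have "inner w0 (xa - ya) = inner w0 \<nu> * wd \<nu>"
      proof -
        have ya': "inner \<nu> ya = - h (-\<nu>)" using ya(2) by simp
        show ?thesis by (subst w0eq) (use xa ya' in \<open>simp add: wd_def inner_diff_right algebra_simps\<close>)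
      qed
      ultimately show False using t0 wdp by simp
    qed
  qed
  obtain \<epsilon> where eps: "\<forall>z. \<epsilon> z = 1 \<or> \<epsilon> z = -1"
    "(\<Sum>z\<in>S. (norm (u z *\<^sub>R Pn \<nu> (fst z)))\<^sup>2) \<le> (norm (\<Sum>z\<in>S. \<epsilon> z *\<^sub>R (u z *\<^sub>R Pn \<nu> (fst z))))\<^sup>2"
    using greedy_signs[OF Su(1), of "\<lambda>z. u z *\<^sub>R Pn \<nu> (fst z)"] by blast
  define v where "v = (1/2) *\<^sub>R (\<Sum>z\<in>S. (\<epsilon> z * u z) *\<^sub>R fst z)"
  have Pv: "Pn \<nu> v = (1/2) *\<^sub>R (\<Sum>z\<in>S. \<epsilon> z *\<^sub>R (u z *\<^sub>R Pn \<nu> (fst z)))"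
    unfolding v_def using linear_Pn[of \<nu>]
    by (simp add: linear_cmul linear_sum o_def)
  define s where "s = norm (Pn \<nu> v)"
  have nz: "norm (u z *\<^sub>R Pn \<nu> (fst z)) = u z * p (fst z)" if "z \<in> S" for z
    using Su(4) that unfolding p_def by simp
  have "(\<Sum>z\<in>S. (u z * p (fst z))\<^sup>2) \<le> 4 * s\<^sup>2"
  proof -
    have "(\<Sum>z\<in>S. (u z * p (fst z))\<^sup>2) = (\<Sum>z\<in>S. (norm (u z *\<^sub>R Pn \<nu> (fst z)))\<^sup>2)"
      using nz by (intro sum.cong) auto
    also have "\<dots> \<le> (norm (\<Sum>z\<in>S. \<epsilon> z *\<^sub>R (u z *\<^sub>R Pn \<nu> (fst z))))\<^sup>2" by (rule eps(2))
    also have "\<dots> = 4 * s\<^sup>2" unfolding s_def Pv by (simp add: power2_eq_square)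
    finally show ?thesis .
  qed
  moreover have "\<Lambda>\<^sup>2 \<le> real (card S) * (\<Sum>z\<in>S. (u z * p (fst z))\<^sup>2)"
    unfolding \<Lambda>_def by (rule cs_sum)
  moreover have "real (card S) \<le> 2 * real n" using Su(3) assms(1) unfolding n_def by linarith
  moreover have "0 \<le> (\<Sum>z\<in>S. (u z * p (fst z))\<^sup>2)" by (intro sum_nonneg) simp
  ultimately have Ls: "\<Lambda>\<^sup>2 \<le> 8 * real n * s\<^sup>2"
  proof -
    assume a1: "(\<Sum>z\<in>S. (u z * p (fst z))\<^sup>2) \<le> 4 * s\<^sup>2"
      and a2: "\<Lambda>\<^sup>2 \<le> real (card S) * (\<Sum>z\<in>S. (u z * p (fst z))\<^sup>2)"
      and a3: "real (card S) \<le> 2 * real n" and a4: "0 \<le> (\<Sum>z\<in>S. (u z * p (fst z))\<^sup>2)"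
    have "real (card S) * (\<Sum>z\<in>S. (u z * p (fst z))\<^sup>2) \<le> (2 * real n) * (4 * s\<^sup>2)"
      by (rule mult_mono) (use a1 a3 a4 in auto)
    thus ?thesis using a2 by simp
  qed
  have s0: "s > 0"
  proof (rule ccontr)
    assume "\<not> s > 0"
    hence "s = 0" unfolding s_def by simp
    hence "\<Lambda>\<^sup>2 \<le> 0" using Ls by simp
    moreover have "\<Lambda>\<^sup>2 > 0" using Lpos by simp
    ultimately show False by simp
  qed
  have wv: "inner (x - y) v \<le> H" if "x \<in> K" "y \<in> K" for x y
  proof -
    define A where "A z = u z * (h (fst z) - inner (fst z) y)" for z
    define B where "B z = u z * (h (fst z) - inner (fst z) x)" for z
    have "inner (x - y) v = (1/2) * (\<Sum>z\<in>S. \<epsilon> z * (A z - B z))"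
      unfolding v_def A_def B_def inner_scaleR_right inner_sum_right
      by (intro arg_cong[where f="\<lambda>t. (1/2) * t"] sum.cong)
         (auto simp: inner_diff_left inner_commute algebra_simps)
    also have "\<dots> \<le> (1/2) * (\<Sum>z\<in>S. A z + B z)"
    proof (intro mult_left_mono sum_mono)
      fix z assume z: "z \<in> S"
      have "0 \<le> A z" "0 \<le> B z" unfolding A_def B_def using slack_nn[OF z] that by auto
      thus "\<epsilon> z * (A z - B z) \<le> A z + B z" using eps(1)[rule_format, of z] by auto
    qed simp
    also have "\<dots> = H" unfolding sum.distrib A_def B_def slack by simp
    finally show ?thesis .
  qed
  have nv: "norm v \<ge> s" unfolding s_def by (rule Pn_le[OF nun])
  hence v0: "norm v > 0" using s0 by linarith
  have hvv: "h v + h (-v) \<le> H"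
  proof -
    obtain x where x: "x \<in> K" "inner v x = h v" using hat by blast
    obtain y where y: "y \<in> K" "inner (-v) y = h (-v)" using hat by blast
    have "h v + h (-v) = inner (x - y) v" using x y by (simp add: inner_diff_left inner_diff_right inner_commute)
    thus ?thesis using wv[OF x(1) y(1)] by simp
  qed
  have wdv: "wd \<nu> * norm v \<le> H"
  proof -
    define vh where "vh = (1 / norm v) *\<^sub>R v"
    have "vh \<in> sphere 0 1" unfolding vh_def using v0 by simp
    hence "wd \<nu> \<le> wd vh" using nu(2) by blast
    obtain x where x: "x \<in> K" "inner vh x = h vh" using hat by blast
    obtain y where y: "y \<in> K" "inner (-vh) y = h (-vh)" using hat by blast
    have "wd vh = inner vh x - inner vh y" using x(2) y(2) unfolding wd_def by simp
    also have "\<dots> = inner (x - y) v / norm v" unfolding vh_def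
      by (simp add: inner_diff_left inner_diff_right inner_commute diff_divide_distrib)
    also have "\<dots> \<le> H / norm v" using wv[OF x(1) y(1)] v0 by (simp add: divide_right_mono)
    finally have "wd \<nu> \<le> H / norm v" using \<open>wd \<nu> \<le> wd vh\<close> by simp
    thus ?thesis using v0 by (simp add: le_divide_eq)
  qed
  have H0: "H \<ge> 0" using wdv wd0 v0 by (meson order.trans zero_le_mult_iff less_imp_le)
  define e where "e = (1 / s) *\<^sub>R Pn \<nu> v"
  define t where "t = inner v \<nu>"
  have en: "norm e = 1" unfolding e_def s_def using s0 unfolding s_def by simp
  have eo: "inner \<nu> e = 0" unfolding e_def Pn_def by (simp add: inner_diff_right nn inner_commute)
  have veq: "v = t *\<^sub>R \<nu> + s *\<^sub>R e" unfolding e_def t_def Pn_def using s0 by simp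
  have nv2: "(norm v)\<^sup>2 = t\<^sup>2 + s\<^sup>2" by (subst veq) (rule norm_orth2[OF nun en eo])
  have tabs: "\<bar>t\<bar> \<le> norm v" unfolding t_def using Cauchy_Schwarz_ineq2[of v \<nu>] nun by simp
  define E where "E = span {\<nu>, e}"
  define m1 where "m1 = (h \<nu> - h (-\<nu>)) / 2"
  define m2 where "m2 = (h v - h (-v)) / 2"
  define z0 where "z0 = m1 *\<^sub>R \<nu> + ((m2 - t * m1) / s) *\<^sub>R e"
  have z0E: "z0 \<in> E" unfolding E_def z0_def span2 by blast
  have projK: "orth_proj E ` K \<subseteq> cball z0 (H / s)"
  proof
    fix q assume "q \<in> orth_proj E ` K"
    then obtain x where x: "x \<in> K" "q = orth_proj E x" by blast
    define d1 where "d1 = inner x \<nu> - m1"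
    define d2 where "d2 = inner x e - (m2 - t * m1) / s"
    have "q - z0 = d1 *\<^sub>R \<nu> + d2 *\<^sub>R e"
      unfolding x(2) E_def orth_proj_plane[OF nun en eo] d1_def d2_def z0_def by (simp add: algebra_simps)
    hence qd: "(dist z0 q)\<^sup>2 = d1\<^sup>2 + d2\<^sup>2"
      using norm_orth2[OF nun en eo] by (simp add: dist_norm norm_minus_commute)
    have X1: "inner x \<nu> \<le> h \<nu>" "- h (-\<nu>) \<le> inner x \<nu>"
      using hge[OF x(1), of \<nu>] hge[OF x(1), of "-\<nu>"] by (simp_all add: inner_commute)
    have d1b: "\<bar>d1\<bar> \<le> wd \<nu> / 2" using X1 unfolding d1_def m1_def wd_def abs_le_iff
      by (intro conjI) (simp_all add: field_simps)
    have Y: "inner v x \<le> h v" "- h (-v) \<le> inner v x"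
      using hge[OF x(1), of v] hge[OF x(1), of "-v"] by simp_all
    have "inner v x = inner (t *\<^sub>R \<nu> + s *\<^sub>R e) x" using veq by simp
    also have "\<dots> = t * inner x \<nu> + s * inner x e" by (simp add: inner_add_left inner_add_right inner_commute)
    finally have "inner v x = t * inner x \<nu> + s * inner x e" .
    hence "s * d2 + t * d1 = inner v x - m2" unfolding d1_def d2_def using s0 by (simp add: field_simps)
    hence d2b: "\<bar>s * d2 + t * d1\<bar> \<le> H / 2" using Y hvv unfolding m2_def abs_le_iff
      by (intro conjI) (simp_all add: field_simps)
    have W2: "(wd \<nu>)\<^sup>2 * (s\<^sup>2 + t\<^sup>2) \<le> H\<^sup>2"
    proof -
      have "(wd \<nu> * norm v)\<^sup>2 \<le> H\<^sup>2" using wdv wd0 v0 by (intro power_mono) auto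
      thus ?thesis using nv2 by (simp add: power_mult_distrib add.commute)
    qed
    have tW: "\<bar>t\<bar> * wd \<nu> \<le> H"
    proof -
      have "norm v * wd \<nu> = wd \<nu> * norm v" by (rule mult.commute)
      thus ?thesis using mult_right_mono[OF tabs wd0] wdv by linarith
    qed
    have "d1\<^sup>2 + d2\<^sup>2 \<le> (H / s)\<^sup>2" by (rule final_ineq[OF s0 wd0 H0 d1b d2b W2 tW])
    hence "(dist z0 q)\<^sup>2 \<le> (H / s)\<^sup>2" using qd by simp
    hence "dist z0 q \<le> H / s" by (rule power2_le_imp_le) (use H0 s0 in simp)
    thus "q \<in> cball z0 (H / s)" by simp
  qed
  have RH: "R_i 2 K \<le> H / s"
    by (rule R_i_le[OF K(3) _ z0E projK]) (unfold E_def, rule plane_in_subspaces[OF nun en eo])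
  have sq: "(\<Lambda> / s)\<^sup>2 \<le> 8 * real n"
    using Ls s0 by (simp add: power_divide divide_le_eq)
  have s8: "sqrt (8 * real n) = 2 * sqrt 2 * sqrt (real n)"
  proof -
    have "sqrt 8 = 2 * sqrt (2::real)"
      using real_sqrt_mult[of 4 2] by simp
    thus ?thesis by (simp add: real_sqrt_mult)
  qed
  have LsB: "\<Lambda> / s \<le> 2 * sqrt 2 * sqrt (real n)"
    using real_le_rsqrt[OF sq] s8 by simp
  have "R_i 2 K / rs \<le> (H / s) / rs" by (rule divide_right_mono[OF RH]) (use rs0 in simp)
  also have "\<dots> \<le> (rs * \<Lambda> / s) / rs" using HL s0 rs0 by (intro divide_right_mono) auto
  also have "\<dots> = \<Lambda> / s" using rs0 by simp
  finally show ?thesis using LsB unfolding rs_def n_def by simp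
qed

end
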